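(* Let $\mathbb{K}$ be a field and let $A=(a_{ij})\in UU_n(\mathbb{K})$ (the group of $n\times n$ upper triangular unipotent matrices over $\mathbb{K}$) have all super-diagonal entries $a_{i,i+1}$ nonzero. If $B=(b_{ij})\in UU_n(\mathbb{K})$ commutes with $A$, then the first-row entries $b_{12},\dots,b_{1n}$ of $B$ determine all the remaining entries of $B$. If $\mathbb{K}=\mathbb{F}_q$ is a finite field with $q$ elements, then the centralizer of $A$ in $UU_n(\mathbb{F}_q)$ has cardinality $q^{n-1}$. *)

theory Defs
  imports "Jordan_Normal_Form.Matrix"
begin

text \<open>Indices are 0-based: entry a_{ij} of the paper is A $$ (i-1, j-1).
  UU n K: n x n upper triangular unipotent matrices over the field K.\<close>
definition UU :: "nat \<Rightarrow> 'a::field mat set" where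
  "UU n = {A \<in> carrier_mat n n. upper_triangular A \<and> (\<forall>i<n. A $$ (i,i) = 1)}"

end

theory Submission
  imports Defs "HOL-Library.FuncSet"
begin

lemma mult_entry:
  assumes "X \<in> carrier_mat n n" "Y \<in> carrier_mat n n" "i < n" "j < n"
  shows "(X * Y) $$ (i,j) = (\<Sum>k\<in>{0..<n}. X $$ (i,k) * Y $$ (k,j))"
  using assms by (simp add: scalar_prod_def)

lemma UU_D:
  assumes "A \<in> UU n"
  shows "A \<in> carrier_mat n n" "\<And>i j. j < i \<Longrightarrow> i < n \<Longrightarrow> A $$ (i,j) = 0"
    "\<And>i. i < n \<Longrightarrow> A $$ (i,i) = 1"
  using assms unfolding UU_def upper_triangular_def by auto

lemma comm_eq:
  fixes A B :: "'a::field mat"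
  assumes A: "A \<in> UU n" and B: "B \<in> UU n" "A * B = B * A"
    and r: "i < j" "Suc i < j" "j < n"
  shows "A $$ (i, Suc i) * B $$ (Suc i, j) =
     (\<Sum>k\<in>{0..<j}. B $$ (i,k) * A $$ (k,j)) - (\<Sum>k\<in>{Suc (Suc i)..<n}. A $$ (i,k) * B $$ (k,j))"
proof -
  note Ac = UU_D[OF A] and Bc = UU_D[OF B(1)]
  have "(A*B) $$ (i,j) = (B*A) $$ (i,j)" using B(2) by simp
  hence eq: "(\<Sum>k\<in>{0..<n}. A $$ (i,k) * B $$ (k,j)) = (\<Sum>k\<in>{0..<n}. B $$ (i,k) * A $$ (k,j))"
    using mult_entry[OF Ac(1) Bc(1)] mult_entry[OF Bc(1) Ac(1)] r by simp
  let ?f = "\<lambda>k. A $$ (i,k) * B $$ (k,j)"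
  let ?g = "\<lambda>k. B $$ (i,k) * A $$ (k,j)"
  have "(\<Sum>k\<in>{0..<n}. ?f k) = sum ?f {0..<i} + sum ?f {i..<n}"
    using r by (simp add: sum.atLeastLessThan_concat)
  also have "sum ?f {0..<i} = 0" using Ac(2) r by (intro sum.neutral) auto
  also have "sum ?f {i..<n} = ?f i + (?f (Suc i) + sum ?f {Suc (Suc i)..<n})"
    using r by (simp add: sum.atLeast_Suc_lessThan)
  finally have L: "(\<Sum>k\<in>{0..<n}. ?f k) = B $$ (i,j) + A $$ (i, Suc i) * B $$ (Suc i, j) + sum ?f {Suc (Suc i)..<n}"
    using Ac(3) r by simp
  have "(\<Sum>k\<in>{0..<n}. ?g k) = sum ?g {0..<j} + sum ?g {j..<n}"
    using r by (simp add: sum.atLeastLessThan_concat)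
  also have "sum ?g {j..<n} = ?g j + sum ?g {Suc j..<n}"
    using r by (simp add: sum.atLeast_Suc_lessThan)
  also have "sum ?g {Suc j..<n} = 0" using Ac(2) r by (intro sum.neutral) auto
  finally have R: "(\<Sum>k\<in>{0..<n}. ?g k) = sum ?g {0..<j} + B $$ (i,j)"
    using Ac(3) r by simp
  show ?thesis using eq L R by (simp add: algebra_simps)
qed

lemma first_row_det:
  fixes A B B' :: "'a::field mat"
  assumes A: "A \<in> UU n" and sup: "\<forall>i. i + 1 < n \<longrightarrow> A $$ (i, i + 1) \<noteq> 0"
    and B: "B \<in> UU n" "A * B = B * A" and B': "B' \<in> UU n" "A * B' = B' * A"
    and row: "\<forall>j. 1 \<le> j \<and> j < n \<longrightarrow> B $$ (0, j) = B' $$ (0, j)"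
  shows "B = B'"
proof -
  note Bc = UU_D[OF B(1)] and B'c = UU_D[OF B'(1)]
  have key: "\<forall>r j. n * (j - r) + r = m \<longrightarrow> r < n \<longrightarrow> j < n \<longrightarrow> B $$ (r,j) = B' $$ (r,j)" for m
  proof (induction m rule: less_induct)
    case (less m)
    show ?case
    proof (intro allI impI)
      fix r j assume m: "n * (j - r) + r = m" and rj: "r < n" "j < n"
      show "B $$ (r,j) = B' $$ (r,j)"
      proof (cases "j \<le> r")
        case True
        then show ?thesis using Bc B'c rj by (cases "j = r") auto
      next
        case False
        show ?thesis
        proof (cases r)
          case 0
          then show ?thesis using row False rj by auto
        next
          case (Suc i)
          have ih: "B $$ (r',j') = B' $$ (r',j')" if "n * (j' - r') + r' < m" "r' < n" "j' < n" for r' j'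
            using less.IH that by blast
          have s1: "(\<Sum>k\<in>{0..<j}. B $$ (i,k) * A $$ (k,j)) = (\<Sum>k\<in>{0..<j}. B' $$ (i,k) * A $$ (k,j))"
          proof (rule sum.cong[OF refl])
            fix k assume k: "k \<in> {0..<j}"
            have "k - i \<le> j - r" using k Suc False by auto
            hence "n * (k - i) \<le> n * (j - r)" by (rule mult_le_mono2)
            hence "n * (k - i) + i < m" using m Suc by linarith
            thus "B $$ (i,k) * A $$ (k,j) = B' $$ (i,k) * A $$ (k,j)" using ih k rj Suc by simp
          qed
          have s2: "(\<Sum>k\<in>{Suc (Suc i)..<n}. A $$ (i,k) * B $$ (k,j)) = (\<Sum>k\<in>{Suc (Suc i)..<n}. A $$ (i,k) * B' $$ (k,j))"
          proof (rule sum.cong[OF refl])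
            fix k assume k: "k \<in> {Suc (Suc i)..<n}"
            have "n * (j - k) + k < m"
            proof (cases "k < j")
              case True
              hence "j - k + 1 \<le> j - r" using k Suc by auto
              hence "n * (j - k + 1) \<le> n * (j - r)" by (rule mult_le_mono2)
              thus ?thesis using m k by (simp add: algebra_simps)
            next
              case False
              hence "j - k = 0" by simp
              moreover have "n * 1 \<le> n * (j - r)" using \<open>\<not> j \<le> r\<close> by (intro mult_le_mono2) simp
              hence "n \<le> n * (j - r)" by (simp only: mult_1_right)
              moreover have "n * (j - k) + k = k" using \<open>j - k = 0\<close> by simp
              moreover have "k < n" using k by simp
              ultimately show ?thesis using m by linarith
            qed
            thus "A $$ (i,k) * B $$ (k,j) = A $$ (i,k) * B' $$ (k,j)" using ih k rj by simp
          qed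
          have ne: "A $$ (i, Suc i) \<noteq> 0" using sup rj Suc by auto
          have "A $$ (i, Suc i) * B $$ (Suc i, j) = A $$ (i, Suc i) * B' $$ (Suc i, j)"
            using comm_eq[OF A B, of i j] comm_eq[OF A B', of i j] s1 s2 False Suc rj by simp
          thus ?thesis using ne Suc by simp
        qed
      qed
    qed
  qed
  show ?thesis
    by (rule eq_matI) (use key Bc(1) B'c(1) in auto)
qed


lemma pow_zero:
  fixes N :: "'a::field mat"
  assumes N: "N \<in> carrier_mat n n" and Nz: "\<And>i j. i < n \<Longrightarrow> j < n \<Longrightarrow> j \<le> i \<Longrightarrow> N $$ (i,j) = 0"
  shows "i < n \<Longrightarrow> j < n \<Longrightarrow> j < i + k \<Longrightarrow> (N ^\<^sub>m k) $$ (i,j) = 0"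
proof (induction k arbitrary: i j)
  case 0
  then show ?case using N by simp
next
  case (Suc k)
  have "(N ^\<^sub>m Suc k) $$ (i,j) = (\<Sum>l\<in>{0..<n}. (N ^\<^sub>m k) $$ (i,l) * N $$ (l,j))"
    using mult_entry[OF pow_carrier_mat[OF N] N] Suc.prems by simp
  also have "\<dots> = 0"
  proof (rule sum.neutral, intro ballI)
    fix l assume l: "l \<in> {0..<n}"
    show "(N ^\<^sub>m k) $$ (i,l) * N $$ (l,j) = 0"
    proof (cases "l < i + k")
      case True then show ?thesis using Suc l by simp
    next
      case False then show ?thesis using Nz[of l j] Suc.prems l by simp
    qed
  qed
  finally show ?case .
qed

lemma pow_diag:
  fixes N :: "'a::field mat"
  assumes N: "N \<in> carrier_mat n n" and Nz: "\<And>i j. i < n \<Longrightarrow> j < n \<Longrightarrow> j \<le> i \<Longrightarrow> N $$ (i,j) = 0"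
  shows "k < n \<Longrightarrow> (N ^\<^sub>m k) $$ (0,k) = (\<Prod>l<k. N $$ (l, Suc l))"
proof (induction k)
  case 0
  then show ?case using N by simp
next
  case (Suc k)
  have "(N ^\<^sub>m Suc k) $$ (0,Suc k) = (\<Sum>l\<in>{0..<n}. (N ^\<^sub>m k) $$ (0,l) * N $$ (l,Suc k))"
    using mult_entry[OF pow_carrier_mat[OF N] N] Suc.prems by simp
  also have "\<dots> = (\<Sum>l\<in>{0..<n}. if l = k then (N ^\<^sub>m k) $$ (0,k) * N $$ (k,Suc k) else 0)"
  proof (rule sum.cong[OF refl])
    fix l assume l: "l \<in> {0..<n}"
    show "(N ^\<^sub>m k) $$ (0,l) * N $$ (l,Suc k) = (if l = k then (N ^\<^sub>m k) $$ (0,k) * N $$ (k,Suc k) else 0)"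
    proof (cases "l < k")
      case True then show ?thesis using pow_zero[OF N Nz, of 0 l k] l Suc.prems by simp
    next
      case False then show ?thesis using Nz[of l "Suc k"] l Suc.prems by auto
    qed
  qed
  also have "\<dots> = (N ^\<^sub>m k) $$ (0,k) * N $$ (k,Suc k)" using Suc.prems by simp
  finally show ?case using Suc by simp
qed

fun Spoly :: "nat \<Rightarrow> 'a::field mat \<Rightarrow> (nat \<Rightarrow> 'a) \<Rightarrow> nat \<Rightarrow> 'a mat" where
  "Spoly n N c 0 = 1\<^sub>m n"
| "Spoly n N c (Suc m) = Spoly n N c m + c (Suc m) \<cdot>\<^sub>m (N ^\<^sub>m Suc m)"

lemma Spoly_carrier: "N \<in> carrier_mat n n \<Longrightarrow> Spoly n N c m \<in> carrier_mat n n"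
  by (induction m) auto

lemma Spoly_entry:
  assumes N: "N \<in> carrier_mat n n" and ij: "i < n" "j < n"
  shows "Spoly n N c m $$ (i,j) = (if i = j then 1 else 0) + (\<Sum>k\<in>{1..m}. c k * (N ^\<^sub>m k) $$ (i,j))"
proof (induction m)
  case 0 then show ?case using ij by simp
next
  case (Suc m)
  have "Spoly n N c (Suc m) $$ (i,j) = Spoly n N c m $$ (i,j) + c (Suc m) * (N ^\<^sub>m Suc m) $$ (i,j)"
    using ij N Spoly_carrier[OF N, of c m] by simp
  then show ?case using Suc by (simp add: algebra_simps)
qed

lemma Spoly_comm:
  fixes A N :: "'a::field mat"
  assumes A: "A \<in> carrier_mat n n" and N: "N \<in> carrier_mat n n" and AN: "A * N = N * A"
  shows "A * Spoly n N c m = Spoly n N c m * A"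
proof -
  have P: "A * (N ^\<^sub>m k) = (N ^\<^sub>m k) * A" for k
  proof (induction k)
    case 0 then show ?case using A N by simp
  next
    case (Suc k)
    have "A * (N ^\<^sub>m Suc k) = (A * N ^\<^sub>m k) * N" using assoc_mult_mat[OF A pow_carrier_mat[OF N] N] by simp
    also have "\<dots> = N ^\<^sub>m k * (A * N)" using Suc assoc_mult_mat[OF pow_carrier_mat[OF N] A N] by simp
    also have "\<dots> = (N ^\<^sub>m k * N) * A" using AN assoc_mult_mat[OF pow_carrier_mat[OF N] N A] by simp
    finally show ?case by simp
  qed
  show ?thesis
  proof (induction m)
    case 0 then show ?case using A by simp
  next
    case (Suc m)
    have S: "Spoly n N c m \<in> carrier_mat n n" by (rule Spoly_carrier[OF N])
    have PN: "N ^\<^sub>m Suc m \<in> carrier_mat n n" by (rule pow_carrier_mat[OF N])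
    have "A * Spoly n N c (Suc m) = A * Spoly n N c m + c (Suc m) \<cdot>\<^sub>m (A * N ^\<^sub>m Suc m)"
      using mult_add_distrib_mat[OF A S smult_carrier_mat[OF PN]] mult_smult_distrib[OF A PN] by simp
    also have "\<dots> = Spoly n N c m * A + c (Suc m) \<cdot>\<^sub>m (N ^\<^sub>m Suc m * A)" using Suc P[of "Suc m"] by (simp del: pow_mat.simps)
    also have "\<dots> = Spoly n N c (Suc m) * A"
      using add_mult_distrib_mat[OF S smult_carrier_mat[OF PN] A] mult_smult_assoc_mat[OF PN A] by simp
    finally show ?case .
  qed
qed

lemma card_part:
  fixes A :: "'a::field mat"
  assumes A: "A \<in> UU n" and sup: "\<forall>i. i + 1 < n \<longrightarrow> A $$ (i, i + 1) \<noteq> 0"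
    and fin: "finite (UNIV :: 'a set)"
  shows "card {B \<in> UU n. A * B = B * A} = card (UNIV :: 'a set) ^ (n - 1)"
proof -
  note Ac = UU_D[OF A]
  define C where "C = {B \<in> UU n. A * B = B * A}"
  define R where "R = (\<Pi>\<^sub>E j\<in>{1..<n}. (UNIV :: 'a set))"
  define f where "f = (\<lambda>B :: 'a mat. restrict (\<lambda>j. B $$ (0,j)) {1..<n})"
  define N where "N = A - 1\<^sub>m n"
  have N: "N \<in> carrier_mat n n" unfolding N_def using Ac(1) by (simp add: minus_carrier_mat)
  have Nent: "N $$ (i,j) = A $$ (i,j) - (if i = j then 1 else 0)" if "i < n" "j < n" for i j
    unfolding N_def using that Ac(1) by simp
  have Nz: "N $$ (i,j) = 0" if "i < n" "j < n" "j \<le> i" for i j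
    using Nent[OF that(1,2)] Ac(2,3) that by (cases "j = i") auto
  have AN: "A * N = N * A" unfolding N_def
    using mult_minus_distrib_mat[OF Ac(1) Ac(1) one_carrier_mat]
      minus_mult_distrib_mat[OF Ac(1) one_carrier_mat Ac(1)] Ac(1) by simp
  have finR: "finite R" unfolding R_def using fin by (intro finite_PiE) auto
  have cardR: "card R = card (UNIV :: 'a set) ^ (n - 1)"
    unfolding R_def by (simp add: card_PiE)
  have injf: "inj_on f C"
  proof (rule inj_onI)
    fix B B' assume B: "B \<in> C" and B': "B' \<in> C" and eq: "f B = f B'"
    have "\<forall>j. 1 \<le> j \<and> j < n \<longrightarrow> B $$ (0, j) = B' $$ (0, j)"
    proof (intro allI impI)
      fix j assume j: "1 \<le> j \<and> j < n"
      have "f B j = f B' j" using eq by simp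
      thus "B $$ (0, j) = B' $$ (0, j)" using j unfolding f_def by simp
    qed
    thus "B = B'" using first_row_det[OF A sup] B B' unfolding C_def by blast
  qed
  have fC: "f ` C \<subseteq> R" unfolding R_def f_def by auto
  have le1: "card C \<le> card R" by (rule card_inj_on_le[OF injf fC finR])
  have finC: "finite C" using finite_imageD[OF finite_subset[OF fC finR] injf] .
  define g where "g = (\<lambda>v. Spoly n N v (n - 1))"
  have gC: "g ` R \<subseteq> C"
  proof
    fix B assume "B \<in> g ` R"
    then obtain v where B: "B = Spoly n N v (n - 1)" unfolding g_def by auto
    have Bc: "B \<in> carrier_mat n n" using B Spoly_carrier[OF N] by simp
    have "B \<in> UU n" unfolding UU_def
    proof (intro CollectI conjI allI impI upper_triangularI)
      show "B \<in> carrier_mat n n" by (rule Bc)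
    next
      fix i j assume ij: "j < i" "i < dim_row B"
      hence "i < n" using Bc by simp
      thus "B $$ (i,j) = 0" unfolding B using Spoly_entry[OF N] pow_zero[OF N Nz] ij by simp
    next
      fix i assume "i < n"
      thus "B $$ (i,i) = 1" unfolding B using Spoly_entry[OF N] pow_zero[OF N Nz] by simp
    qed
    moreover have "A * B = B * A" unfolding B by (rule Spoly_comm[OF Ac(1) N AN])
    ultimately show "B \<in> C" unfolding C_def by simp
  qed
  have injg: "inj_on g R"
  proof (rule inj_onI)
    fix v w assume v: "v \<in> R" and w: "w \<in> R" and eq: "g v = g w"
    have vk: "v k = w k" if "k \<in> {1..<n}" for k
      using that
    proof (induction k rule: less_induct)
      case (less k)
      have kn: "k < n" "1 \<le> k" using less.prems by auto
      have "Spoly n N v (n - 1) $$ (0,k) = Spoly n N w (n - 1) $$ (0,k)"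
        using eq unfolding g_def by simp
      hence "(\<Sum>l\<in>{1..n-1}. v l * (N ^\<^sub>m l) $$ (0,k)) = (\<Sum>l\<in>{1..n-1}. w l * (N ^\<^sub>m l) $$ (0,k))"
        using Spoly_entry[OF N, of 0 k] kn by simp
      hence "(\<Sum>l\<in>{1..n-1}. (v l - w l) * (N ^\<^sub>m l) $$ (0,k)) = 0"
        by (simp add: algebra_simps sum_subtractf)
      also have "(\<Sum>l\<in>{1..n-1}. (v l - w l) * (N ^\<^sub>m l) $$ (0,k))
          = (\<Sum>l\<in>{1..n-1}. if l = k then (v k - w k) * (N ^\<^sub>m k) $$ (0,k) else 0)"
      proof (rule sum.cong[OF refl])
        fix l assume l: "l \<in> {1..n-1}"
        show "(v l - w l) * (N ^\<^sub>m l) $$ (0,k) = (if l = k then (v k - w k) * (N ^\<^sub>m k) $$ (0,k) else 0)"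
        proof (cases "l < k")
          case True then show ?thesis using less.IH[of l] l kn by simp
        next
          case False then show ?thesis using pow_zero[OF N Nz, of 0 k l] kn by auto
        qed
      qed
      also have "\<dots> = (v k - w k) * (N ^\<^sub>m k) $$ (0,k)"
      proof -
        have "k \<in> {1..n-1}" using kn by auto
        thus ?thesis by (simp only: sum.delta finite_atLeastAtMost if_True)
      qed
      finally have z: "(v k - w k) * (N ^\<^sub>m k) $$ (0,k) = 0" .
      have "(N ^\<^sub>m k) $$ (0,k) = (\<Prod>l<k. N $$ (l, Suc l))" by (rule pow_diag[OF N Nz kn(1)])
      also have "\<dots> \<noteq> 0"
      proof -
        have "N $$ (l, Suc l) \<noteq> 0" if "l < k" for l
          using Nent[of l "Suc l"] sup that kn by auto
        thus ?thesis by simp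
      qed
      finally show ?case using z by simp
    qed
    show "v = w" using PiE_ext[OF v[unfolded R_def] w[unfolded R_def]] vk by blast
  qed
  have le2: "card R \<le> card C" by (rule card_inj_on_le[OF injg gC finC])
  show ?thesis using le1 le2 cardR unfolding C_def by simp
qed

theorem lemma11p2:
  fixes A :: "'a::field mat" and n :: nat
  assumes "A \<in> UU n"
    and "\<forall>i. i + 1 < n \<longrightarrow> A $$ (i, i + 1) \<noteq> 0"
  shows "(\<forall>B \<in> UU n. \<forall>B' \<in> UU n. A * B = B * A \<longrightarrow> A * B' = B' * A \<longrightarrow>
            (\<forall>j. 1 \<le> j \<and> j < n \<longrightarrow> B $$ (0, j) = B' $$ (0, j)) \<longrightarrow> B = B')
       \<and> (finite (UNIV :: 'a set) \<longrightarrow>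
            card {B \<in> UU n. A * B = B * A} = card (UNIV :: 'a set) ^ (n - 1))"
  using first_row_det[OF assms] card_part[OF assms] by blast

end
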